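(* Let $\mathcal T\subseteq\mathbb N$ be a symmetric numerical semigroup with minimal system of generators $a_1<\dots<a_n$. If $2\notin\mathcal T$, then $a_n<F(\mathcal T)$.
   Context: A numerical semigroup is a submonoid $\mathcal T\subseteq\mathbb N$ with finite complement; its Frobenius number is $F(\mathcal T)=\max(\mathbb N\setminus\mathcal T)$; $\mathcal T$ is symmetric if for every $b\in\mathbb N$, $b\in\mathcal T$ or $F(\mathcal T)-b\in\mathcal T$. The minimal system of generators is the unique minimal generating set of $\mathcal T$ as a monoid. *)

theory Defs
  imports Main
begin

definition numerical_semigroup :: "nat set \<Rightarrow> bool" where
  "numerical_semigroup T \<longleftrightarrow> 0 \<in> T \<and> (\<forall>x\<in>T. \<forall>y\<in>T. x + y \<in> T) \<and> finite (UNIV - T)"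

definition frobenius :: "nat set \<Rightarrow> nat" where
  "frobenius T = Max (UNIV - T)"

definition symmetric_ns :: "nat set \<Rightarrow> bool" where
  "symmetric_ns T \<longleftrightarrow> numerical_semigroup T \<and> (\<forall>b. b \<in> T \<or> (b \<le> frobenius T \<and> frobenius T - b \<in> T))"

inductive_set generated :: "nat set \<Rightarrow> nat set" for A where
  zero: "0 \<in> generated A"
| add: "a \<in> A \<Longrightarrow> x \<in> generated A \<Longrightarrow> a + x \<in> generated A"

definition minimal_generators :: "nat set \<Rightarrow> nat set \<Rightarrow> bool" where
  "minimal_generators T A \<longleftrightarrow> generated A = T \<and> (\<forall>B. B \<subset> A \<longrightarrow> generated B \<noteq> T)"

end

theory Submission
  imports Defs
begin

lemma gen_add: "x \<in> generated B \<Longrightarrow> y \<in> generated B \<Longrightarrow> x + y \<in> generated B"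
  by (induction x rule: generated.induct) (auto simp: add.assoc intro: generated.add)

lemma gen_mono: assumes "B \<subseteq> C" shows "x \<in> generated B \<Longrightarrow> x \<in> generated C"
  by (induction x rule: generated.induct) (use assms in \<open>auto intro: generated.intros\<close>)

lemma irred:
  assumes mg: "minimal_generators T A" and aA: "a \<in> A"
    and x: "x \<in> T" "x \<noteq> 0" and y: "y \<in> T" "y \<noteq> 0" and axy: "a = x + y"
  shows False
proof -
  define B where "B = A - {a}"
  have gA: "generated A = T" using mg unfolding minimal_generators_def by blast
  have small: "t \<in> generated B" if "t \<in> generated A" "t < a" for t
    using that
  proof (induction t rule: generated.induct)
    case zero then show ?case by (simp add: generated.intros(1))
  next
    case (add a' z)
    then have "a' \<noteq> a" by auto
    with add show ?case by (auto simp: B_def intro: generated.add)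
  qed
  have "x \<in> generated B" using small x gA axy y by auto
  moreover have "y \<in> generated B" using small y gA axy x by auto
  ultimately have aB: "a \<in> generated B" using gen_add axy by simp
  have "t \<in> generated B" if "t \<in> generated A" for t
    using that
  proof (induction t rule: generated.induct)
    case zero then show ?case by (simp add: generated.intros(1))
  next
    case (add a' z)
    have "a' \<in> generated B"
    proof (cases "a' = a")
      case True then show ?thesis using aB by simp
    next
      case False
      then have "a' \<in> B" using add by (auto simp: B_def)
      then show ?thesis using generated.add[OF _ generated.zero, of a' B] by simp
    qed
    then show ?case using gen_add add by blast
  qed
  moreover have "generated B \<subseteq> generated A" using gen_mono[of B A] by (auto simp: B_def)
  ultimately have "generated B = T" using gA by blast
  moreover have "B \<subset> A" using aA by (auto simp: B_def)
  ultimately show False using mg unfolding minimal_generators_def by blast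
qed

theorem mainTheorem13:
  fixes T A :: "nat set"
  assumes "symmetric_ns T"
    and "minimal_generators T A"
    and "2 \<notin> T"
  shows "finite A \<and> Max A < frobenius T"
proof -
  define F where "F = frobenius T"
  have ns: "numerical_semigroup T" and sym: "\<And>b. b \<in> T \<or> (b \<le> F \<and> F - b \<in> T)"
    using assms(1) unfolding symmetric_ns_def F_def by auto
  have T0: "0 \<in> T" and Tadd: "\<And>x y. x \<in> T \<Longrightarrow> y \<in> T \<Longrightarrow> x + y \<in> T"
    and fin: "finite (UNIV - T)" using ns unfolding numerical_semigroup_def by auto
  have ne: "UNIV - T \<noteq> {}" using assms(3) by auto
  have FnT: "F \<notin> T" using Max_in[OF fin ne] unfolding F_def frobenius_def by auto
  have le: "x \<le> F" if "x \<notin> T" for x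
    using Max_ge[OF fin, of x] that unfolding F_def frobenius_def by auto
  have n1: "1 \<notin> T" using Tadd[of 1 1] assms(3) by (metis one_add_one)
  have F2: "2 \<le> F" using le assms(3) by auto
  have F1T: "F - 1 \<in> T" using sym[of 1] n1 by auto
  have F3: "F \<noteq> 2" using F1T n1 by auto
  have F2T: "F - 2 \<in> T" using sym[of 2] assms(3) by auto
  have gA: "generated A = T" using assms(2) unfolding minimal_generators_def by blast
  have AT: "A \<subseteq> T"
  proof
    fix a assume "a \<in> A"
    then have "a + 0 \<in> generated A" by (intro generated.intros)
    then show "a \<in> T" using gA by simp
  qed
  have bound: "a < F" if aA: "a \<in> A" for a
  proof (rule ccontr)
    assume "\<not> a < F"
    moreover have "a \<noteq> F" using AT aA FnT by auto
    ultimately have aF: "a > F" by simp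
    define d where "d = a - F"
    have dpos: "d > 0" using aF d_def by simp
    have step: "s \<ge> d \<and> s - d \<in> T" if s: "s \<in> T" "s \<noteq> 0" "s < a" for s
    proof -
      have "a - s \<notin> T"
      proof
        assume "a - s \<in> T"
        moreover have "a - s \<noteq> 0" using s by simp
        ultimately show False using irred[OF assms(2) aA s(1,2), of "a - s"] s by simp
      qed
      then have "a - s \<le> F \<and> F - (a - s) \<in> T" using sym[of "a - s"] by blast
      moreover have "F - (a - s) = s - d" using s aF d_def by simp
      ultimately have h: "a - s \<le> F" "s - d \<in> T" by auto
      have "d \<le> s" using h(1) s(3) aF unfolding d_def by arith
      then show ?thesis using h by simp
    qed
    have dv: "s \<in> T \<longrightarrow> s < a \<longrightarrow> d dvd s \<and> (s \<noteq> 0 \<longrightarrow> d \<in> T)" for s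
    proof (induction s rule: less_induct)
      case (less s)
      show ?case
      proof (intro impI)
        assume sT: "s \<in> T" and sa: "s < a"
        show "d dvd s \<and> (s \<noteq> 0 \<longrightarrow> d \<in> T)"
        proof (cases "s = 0")
          case True then show ?thesis by simp
        next
          case False
          with step sT sa have st: "s \<ge> d" "s - d \<in> T" by auto
          have "d dvd (s - d) \<and> (s - d \<noteq> 0 \<longrightarrow> d \<in> T)"
            using less.IH[of "s - d"] st dpos sa by simp
          moreover have "s - d = 0 \<Longrightarrow> d \<in> T" using st sT by (metis diff_is_0_eq le_antisym)
          moreover have "d dvd (s - d) \<Longrightarrow> d dvd s" using st
            by (metis dvd_add_triv_right_iff le_add_diff_inverse add.commute)
          ultimately show ?thesis by blast
        qed
      qed
    qed
    have d1: "d dvd F - 1" "F - 1 \<noteq> 0 \<longrightarrow> d \<in> T" using dv[of "F - 1"] F1T aF by auto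
    have d2: "d dvd F - 2" using dv[of "F - 2"] F2T aF by auto
    have "F - 1 = (F - 2) + 1" using F2 F3 by simp
    then have "d dvd 1" using d1 d2 by (metis dvd_add_right_iff)
    then have "d = 1" by simp
    moreover have "d \<in> T" using d1 F2 by simp
    ultimately show False using n1 by simp
  qed
  have finA: "finite A" using bound by (meson finite_lessThan finite_subset lessThan_iff subsetI)
  have "A \<noteq> {}"
  proof
    assume "A = {}"
    then have "generated A \<subseteq> {0}" by (auto elim: generated.cases)
    then have "T \<subseteq> {0}" using gA by simp
    then have "UNIV - {0} \<subseteq> UNIV - T" by auto
    moreover have "infinite (UNIV - {0::nat})" by simp
    ultimately show False using fin finite_subset by blast
  qed
  then have "Max A < F" using finA bound Max_in by blast
  then show ?thesis using finA F_def by simp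
qed

end
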